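(* Let $A$ and $B$ be Hermitian (bounded) operators on a finite-dimensional Hilbert space, and let $\gamma:[0,\infty)\to\mathbb{R}$ be a non-decreasing continuous function such that $\|e^{-iAt}-e^{-iBt}\|_2\le t\,\gamma(t)$ for all $t\ge 0$. Then $\|A-B\|_2\le\gamma(t)$ for every $t\ge 0$.
   Context: $\|\cdot\|_2$ denotes the operator (spectral) norm. *)

theory Defs
  imports "HOL-Analysis.Analysis"
begin

text \<open>Finite-dimensional Hilbert space modelled as complex^'n (Euclidean norm);
 operators as complex matrices complex^'n^'n.\<close>

definition hermitian :: "complex^'n^'n \<Rightarrow> bool" where
  "hermitian A \<longleftrightarrow> (\<forall>i j. A $ i $ j = cnj (A $ j $ i))"

text \<open>Operator (spectral) norm, induced by the Euclidean norm on complex^'n.\<close>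
definition op_norm :: "complex^'n^'n \<Rightarrow> real" where
  "op_norm A = onorm (\<lambda>x. A *v x)"

fun mat_pow :: "complex^'n^'n \<Rightarrow> nat \<Rightarrow> complex^'n^'n" where
  "mat_pow M 0 = mat 1"
| "mat_pow M (Suc k) = M ** mat_pow M k"

definition mat_exp :: "complex^'n^'n \<Rightarrow> complex^'n^'n" where
  "mat_exp M = (\<Sum>k. (1 / fact k) *\<^sub>R mat_pow M k)"

definition cscale :: "complex \<Rightarrow> complex^'n^'n \<Rightarrow> complex^'n^'n" where
  "cscale c A = (\<chi> i j. c * A $ i $ j)"

end

theory Submission
  imports Defs
begin

definition N1 :: "complex^'n^'m \<Rightarrow> real" where
  "N1 M = (\<Sum>i\<in>UNIV. \<Sum>j\<in>UNIV. cmod (M $ i $ j))"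

lemma N1_nonneg: "0 \<le> N1 M"
  unfolding N1_def by (intro sum_nonneg) auto

lemma norm_vec_le_l1: "norm (x::'a::real_normed_vector^'n) \<le> (\<Sum>i\<in>UNIV. norm (x $ i))"
  by (simp add: norm_vec_def L2_set_le_sum)

lemma norm_le_N1: "norm M \<le> N1 M"
proof -
  have "norm M \<le> (\<Sum>i\<in>UNIV. norm (M $ i))" by (rule norm_vec_le_l1)
  also have "\<dots> \<le> (\<Sum>i\<in>UNIV. \<Sum>j\<in>UNIV. cmod (M $ i $ j))"
    by (intro sum_mono norm_vec_le_l1)
  finally show ?thesis unfolding N1_def .
qed

lemma N1_le_norm: "N1 (M::complex^'n^'m) \<le> real CARD('m) * real CARD('n) * norm M"
proof -
  have "N1 M \<le> (\<Sum>i\<in>(UNIV::'m set). \<Sum>j\<in>(UNIV::'n set). norm M)"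
    unfolding N1_def
    by (intro sum_mono) (metis Finite_Cartesian_Product.norm_nth_le order_trans)
  then show ?thesis by simp
qed

lemma N1_mult: "N1 ((M::complex^'n^'n) ** P) \<le> N1 M * N1 P"
proof -
  have "N1 (M ** P) \<le> (\<Sum>i\<in>UNIV. \<Sum>j\<in>UNIV. \<Sum>k\<in>UNIV. cmod (M$i$k) * cmod (P$k$j))"
    unfolding N1_def matrix_matrix_mult_def
  proof (intro sum_mono)
    fix i j
    show "cmod ((\<chi> i j. \<Sum>k\<in>UNIV. M $ i $ k * P $ k $ j) $ i $ j) \<le> (\<Sum>k\<in>UNIV. cmod (M$i$k) * cmod (P$k$j))"
      by (simp only: vec_lambda_beta, rule order_trans[OF norm_sum], simp add: norm_mult)
  qed
  also have "\<dots> = (\<Sum>i\<in>UNIV. \<Sum>k\<in>UNIV. cmod (M$i$k) * (\<Sum>j\<in>UNIV. cmod (P$k$j)))"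
  proof (rule sum.cong[OF refl])
    fix i
    show "(\<Sum>j\<in>UNIV. \<Sum>k\<in>UNIV. cmod (M$i$k) * cmod (P$k$j)) = (\<Sum>k\<in>UNIV. cmod (M$i$k) * (\<Sum>j\<in>UNIV. cmod (P$k$j)))"
      by (subst sum.swap) (simp only: sum_distrib_left)
  qed
  also have "\<dots> \<le> (\<Sum>i\<in>UNIV. \<Sum>k\<in>UNIV. cmod (M$i$k) * N1 P)"
  proof (intro sum_mono mult_left_mono)
    fix k show "(\<Sum>j\<in>UNIV. cmod (P$k$j)) \<le> N1 P"
      unfolding N1_def
      by (rule member_le_sum[where f="\<lambda>k. \<Sum>j\<in>UNIV. cmod (P$k$j)"]) (auto intro: sum_nonneg)
  qed auto
  also have "\<dots> = N1 M * N1 P"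
    unfolding N1_def by (simp add: sum_distrib_right)
  finally show ?thesis .
qed

lemma N1_mat1: "N1 (mat 1 :: complex^'n^'n) = real CARD('n)"
  unfolding N1_def mat_def by (simp add: if_distrib cong: if_cong)

lemma N1_pow: "N1 (mat_pow (M::complex^'n^'n) k) \<le> real CARD('n) * N1 M ^ k"
proof (induction k)
  case 0 then show ?case by (simp add: N1_mat1)
next
  case (Suc k)
  have "N1 (mat_pow M (Suc k)) \<le> N1 M * N1 (mat_pow M k)" by (simp add: N1_mult)
  also have "\<dots> \<le> N1 M * (real CARD('n) * N1 M ^ k)"
    by (intro mult_left_mono Suc N1_nonneg)
  finally show ?case by (simp add: algebra_simps)
qed

lemma N1_scaleR: "N1 (r *\<^sub>R M) = \<bar>r\<bar> * N1 M"
  unfolding N1_def by (simp add: sum_distrib_left)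

lemma N1_cscale: "N1 (cscale c M) = cmod c * N1 M"
  unfolding N1_def cscale_def by (simp add: sum_distrib_left norm_mult)

lemma mv_N1: "norm ((M::complex^'n^'n) *v x) \<le> N1 M * norm x"
proof -
  have nx: "\<And>j. cmod (x $ j) \<le> norm x" using Finite_Cartesian_Product.norm_nth_le by blast
  have "norm (M *v x) \<le> (\<Sum>i\<in>UNIV. norm ((M *v x) $ i))" by (rule norm_vec_le_l1)
  also have "\<dots> \<le> (\<Sum>i\<in>UNIV. \<Sum>j\<in>UNIV. cmod (M$i$j) * norm x)"
    unfolding matrix_vector_mult_def
    by (intro sum_mono) (auto intro!: order_trans[OF norm_sum] sum_mono mult_left_mono simp: norm_mult nx)
  also have "\<dots> = N1 M * norm x" unfolding N1_def by (simp add: sum_distrib_right)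
  finally show ?thesis .
qed

lemma summable_matexp: "summable (\<lambda>k. (1 / fact k) *\<^sub>R mat_pow (M::complex^'n^'n) k)"
proof (rule summable_comparison_test)
  show "\<exists>N. \<forall>n\<ge>N. norm ((1 / fact n) *\<^sub>R mat_pow M n) \<le> real CARD('n) * (inverse (fact n) * N1 M ^ n)"
  proof (intro exI allI impI)
    fix n :: nat
    have "norm ((1 / fact n) *\<^sub>R mat_pow M n) \<le> N1 ((1 / fact n) *\<^sub>R mat_pow M n)" by (rule norm_le_N1)
    also have "\<dots> = (1 / fact n) * N1 (mat_pow M n)" by (simp add: N1_scaleR)
    also have "\<dots> \<le> (1 / fact n) * (real CARD('n) * N1 M ^ n)" by (intro mult_left_mono N1_pow) auto
    finally show "norm ((1 / fact n) *\<^sub>R mat_pow M n) \<le> real CARD('n) * (inverse (fact n) * N1 M ^ n)"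
      by (simp add: field_simps)
  qed
  show "summable (\<lambda>n. real CARD('n) * (inverse (fact n) * N1 M ^ n))"
    by (intro summable_mult summable_exp)
qed

lemma exp_split:
  "mat_exp (M::complex^'n^'n) = mat 1 + M + (\<Sum>k. (1 / fact (k+2)) *\<^sub>R mat_pow M (k+2))"
proof -
  have "mat_exp M = (\<Sum>k. (1 / fact (k+2)) *\<^sub>R mat_pow M (k+2)) + (\<Sum>i<2. (1 / fact i) *\<^sub>R mat_pow M i)"
    unfolding mat_exp_def by (rule suminf_split_initial_segment[OF summable_matexp])
  also have "(\<Sum>i<2. (1 / fact i) *\<^sub>R mat_pow M i) = mat 1 + M"
    by (simp add: numeral_2_eq_2 matrix_mul_rid)
  finally show ?thesis by (simp add: algebra_simps)
qed

lemma rem_bound: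
  fixes A :: "complex^'n^'n"
  assumes "cmod c \<le> 1"
  shows "norm (\<Sum>k. (1 / fact (k+2)) *\<^sub>R mat_pow (cscale c A) (k+2))
    \<le> (\<Sum>k. cmod c ^ 2 * (real CARD('n) * (inverse (fact (k+2)) * N1 A ^ (k+2))))"
proof (rule norm_suminf_le)
  fix k :: nat
  have "norm ((1 / fact (k+2)) *\<^sub>R mat_pow (cscale c A) (k+2)) \<le> N1 ((1 / fact (k+2)) *\<^sub>R mat_pow (cscale c A) (k+2))"
    by (rule norm_le_N1)
  also have "\<dots> = (1 / fact (k+2)) * N1 (mat_pow (cscale c A) (k+2))" by (simp add: N1_scaleR)
  also have "\<dots> \<le> (1 / fact (k+2)) * (real CARD('n) * (cmod c * N1 A) ^ (k+2))"
  proof -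
    have "N1 (mat_pow (cscale c A) (k+2)) \<le> real CARD('n) * (cmod c * N1 A) ^ (k+2)"
      using N1_pow[of "cscale c A" "k+2"] by (simp only: N1_cscale)
    then show ?thesis by (intro mult_left_mono) auto
  qed
  also have "\<dots> = cmod c ^ (k+2) * (real CARD('n) * (inverse (fact (k+2)) * N1 A ^ (k+2)))"
    by (simp add: power_mult_distrib field_simps)
  also have "\<dots> \<le> cmod c ^ 2 * (real CARD('n) * (inverse (fact (k+2)) * N1 A ^ (k+2)))"
    by (intro mult_right_mono power_decreasing) (auto simp: assms N1_nonneg)
  finally show "norm ((1 / fact (k+2)) *\<^sub>R mat_pow (cscale c A) (k+2)) \<le> cmod c ^ 2 * (real CARD('n) * (inverse (fact (k+2)) * N1 A ^ (k+2)))" .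
next
  show "summable (\<lambda>k. cmod c ^ 2 * (real CARD('n) * (inverse (fact (k+2)) * N1 A ^ (k+2))))"
    by (intro summable_mult summable_ignore_initial_segment[OF summable_exp])
qed

lemma norm_cmul_vec: "norm (\<chi> i. c * (v::complex^'n) $ i) = cmod c * norm v"
  unfolding norm_vec_def by (simp add: norm_mult L2_set_right_distrib)

lemma cscale_diff_mv: "(cscale c A - cscale c B) *v x = (\<chi> i. c * ((A - B) *v x) $ i)"
  by (simp add: vec_eq_iff matrix_vector_mult_def cscale_def sum_distrib_left algebra_simps
      sum_subtractf[symmetric])

theorem mainTheorem4:
  fixes A B :: "complex^'n^'n" and \<gamma> :: "real \<Rightarrow> real"
  assumes "hermitian A" and "hermitian B"
    and "mono_on {0..} \<gamma>" and "continuous_on {0..} \<gamma>"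
    and "\<And>t. t \<ge> 0 \<Longrightarrow>
      op_norm (mat_exp (cscale (- \<i> * complex_of_real t) A) - mat_exp (cscale (- \<i> * complex_of_real t) B)) \<le> t * \<gamma> t"
  shows "\<forall>t\<ge>0. op_norm (A - B) \<le> \<gamma> t"
proof -
  define R where "R = (\<lambda>(M::complex^'n^'n). (\<Sum>k. (1 / fact (k+2)) *\<^sub>R mat_pow M (k+2)))"
  define S where "S = (\<lambda>(M::complex^'n^'n). (\<Sum>k. real CARD('n) * (inverse (fact (k+2)) * N1 M ^ (k+2))))"
  define C where "C = real CARD('n) * real CARD('n)"
  define K where "K = C * (S A + S B)"
  have Rb: "norm (R (cscale (- \<i> * complex_of_real t) M) *v x) \<le> t^2 * (C * S M) * norm x"
    if "0 \<le> t" "t \<le> 1" for M t x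
  proof -
    have "norm (R (cscale (- \<i> * complex_of_real t) M)) \<le> (\<Sum>k. t ^ 2 * (real CARD('n) * (inverse (fact (k+2)) * N1 M ^ (k+2))))"
      using rem_bound[of "- \<i> * complex_of_real t" M] that unfolding R_def by (simp add: norm_mult)
    also have "\<dots> = t^2 * S M" unfolding S_def
      by (intro suminf_mult summable_mult summable_ignore_initial_segment[OF summable_exp])
    finally have n: "norm (R (cscale (- \<i> * complex_of_real t) M)) \<le> t^2 * S M" .
    have "norm (R (cscale (- \<i> * complex_of_real t) M) *v x) \<le> N1 (R (cscale (- \<i> * complex_of_real t) M)) * norm x"
      by (rule mv_N1)
    also have "\<dots> \<le> (C * norm (R (cscale (- \<i> * complex_of_real t) M))) * norm x"
      unfolding C_def by (intro mult_right_mono N1_le_norm) auto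
    also have "\<dots> \<le> (C * (t^2 * S M)) * norm x"
      unfolding C_def by (intro mult_right_mono mult_left_mono n) auto
    finally show ?thesis by (simp add: algebra_simps)
  qed
  have key: "op_norm (A - B) \<le> \<gamma> t + K * t" if t0: "0 < t" and t1: "t \<le> 1" for t
  proof -
    define c where "c = - \<i> * complex_of_real t"
    have cm: "cmod c = t" unfolding c_def using t0 by (simp add: norm_mult)
    define E where "E = mat_exp (cscale c A) - mat_exp (cscale c B)"
    have Eeq: "E = (cscale c A - cscale c B) + (R (cscale c A) - R (cscale c B))"
      unfolding E_def R_def by (subst (1 2) exp_split) (simp add: algebra_simps)
    have "norm ((A - B) *v x) \<le> (\<gamma> t + K * t) * norm x" for x
    proof -
      have "t * norm ((A - B) *v x) = norm ((cscale c A - cscale c B) *v x)"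
        by (simp add: cscale_diff_mv norm_cmul_vec cm)
      also have "(cscale c A - cscale c B) *v x = E *v x - R (cscale c A) *v x + R (cscale c B) *v x"
        by (simp add: Eeq matrix_vector_mult_add_rdistrib matrix_vector_mult_diff_rdistrib)
      also have "norm \<dots> \<le> norm (E *v x) + norm (R (cscale c A) *v x) + norm (R (cscale c B) *v x)"
        by (rule order_trans[OF norm_triangle_ineq]) (auto intro: order_trans[OF norm_triangle_ineq4])
      also have "\<dots> \<le> (t * \<gamma> t) * norm x + t^2 * (C * S A) * norm x + t^2 * (C * S B) * norm x"
      proof (intro add_mono)
        have "norm (E *v x) \<le> op_norm E * norm x"
          unfolding op_norm_def by (rule onorm) simp
        also have "\<dots> \<le> (t * \<gamma> t) * norm x"
          using assms(5)[of t] t0 unfolding E_def c_def by (intro mult_right_mono) auto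
        finally show "norm (E *v x) \<le> (t * \<gamma> t) * norm x" .
        show "norm (R (cscale c A) *v x) \<le> t^2 * (C * S A) * norm x"
          unfolding c_def using Rb t0 t1 by simp
        show "norm (R (cscale c B) *v x) \<le> t^2 * (C * S B) * norm x"
          unfolding c_def using Rb t0 t1 by simp
      qed
      also have "\<dots> = t * ((\<gamma> t + K * t) * norm x)"
        unfolding K_def by (simp add: algebra_simps power2_eq_square)
      finally show ?thesis using t0 by simp
    qed
    then show ?thesis unfolding op_norm_def by (intro onorm_le) auto
  qed
  have g0: "op_norm (A - B) \<le> \<gamma> 0"
  proof (rule field_le_epsilon)
    fix e :: real assume e: "0 < e"
    have K0: "0 \<le> K"
      unfolding K_def C_def S_def
      by (intro mult_nonneg_nonneg add_nonneg_nonneg suminf_nonneg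
          summable_mult summable_ignore_initial_segment[OF summable_exp]) (auto simp: N1_nonneg)
    obtain d where d: "d > 0" and dh: "\<And>x. x \<in> {0..} \<Longrightarrow> dist x 0 < d \<Longrightarrow> dist (\<gamma> x) (\<gamma> 0) < e/2"
      using assms(4) e unfolding continuous_on_iff
      by (metis atLeast_iff half_gt_zero order_refl)
    define t where "t = min 1 (min (d/2) (e / (2 * (K + 1))))"
    have t0: "0 < t" unfolding t_def using d e K0 by auto
    have t1: "t \<le> 1" unfolding t_def by auto
    have "t < d" unfolding t_def using d by auto
    then have "dist (\<gamma> t) (\<gamma> 0) < e/2" using t0 by (intro dh) (auto simp: dist_real_def)
    then have g: "\<gamma> t < \<gamma> 0 + e/2" unfolding dist_real_def by linarith
    have "t \<le> e / (2 * (K + 1))" unfolding t_def by auto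
    then have "K * t \<le> K * (e / (2 * (K + 1)))" using K0 by (intro mult_left_mono) auto
    also have "\<dots> \<le> e/2" using K0 e by (simp add: field_simps)
    finally show "op_norm (A - B) \<le> \<gamma> 0 + e" using key[OF t0 t1] g by linarith
  qed
  show ?thesis
  proof (intro allI impI)
    fix t :: real assume "0 \<le> t"
    then have "\<gamma> 0 \<le> \<gamma> t" using assms(3) by (auto intro: mono_onD)
    then show "op_norm (A - B) \<le> \<gamma> t" using g0 by linarith
  qed
qed

end
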